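(* Let $S$ be a numerical semigroup and $G=G(S)$. Let $y$ be a nonloopy vertex of $G$. Then there is no neighbor $z$ of $y$ in $G$ with $z-y\in S^*$.
   Context: A numerical semigroup is a subset $S\subseteq\mathbb N$ containing $0$, closed under addition, with finite complement; $S^*=S\setminus\{0\}$, $m=\min S^*$, $X=\{s\in S^*: s-m\notin S\}$. The graph $G(S)$ has edge set all subsets $\{x,y\}\subseteq X$ ($x=y$ allowed) with $x+y\in X$, and vertex set the endvertices of these edges. A vertex $y$ is nonloopy if $2y\notin X$; $z$ is a neighbor of $y$ if $z\in X$ and $y+z\in X$. *)

theory Defs
  imports Main
begin

definition numerical_semigroup :: "nat set \<Rightarrow> bool" where
  "numerical_semigroup S \<longleftrightarrow> 0 \<in> S \<and> (\<forall>x\<in>S. \<forall>y\<in>S. x + y \<in> S) \<and> finite (UNIV - S)"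

definition nz :: "nat set \<Rightarrow> nat set" where
  "nz S = S - {0}"

definition mult :: "nat set \<Rightarrow> nat" where
  "mult S = Min (nz S)"

(* X = {s \<in> S^* : s - m \<notin> S}, with s - m an integer difference *)
definition Xset :: "nat set \<Rightarrow> nat set" where
  "Xset S = {s \<in> nz S. \<not> (int s - int (mult S) \<ge> 0 \<and> nat (int s - int (mult S)) \<in> S)}"

definition edges :: "nat set \<Rightarrow> nat set set" where
  "edges S = {{x, y} | x y. x \<in> Xset S \<and> y \<in> Xset S \<and> x + y \<in> Xset S}"

definition vertices :: "nat set \<Rightarrow> nat set" where
  "vertices S = \<Union> (edges S)"

definition nonloopy :: "nat set \<Rightarrow> nat \<Rightarrow> bool" where
  "nonloopy S y \<longleftrightarrow> 2 * y \<notin> Xset S"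

definition neighbor :: "nat set \<Rightarrow> nat \<Rightarrow> nat \<Rightarrow> bool" where
  "neighbor S y z \<longleftrightarrow> z \<in> Xset S \<and> y + z \<in> Xset S"

end

theory Submission
  imports Defs
begin

theorem lemma4p12:
  fixes S :: "nat set" and y :: nat
  assumes "numerical_semigroup S"
    and "y \<in> vertices S"
    and "nonloopy S y"
  shows "\<not> (\<exists>z. neighbor S y z \<and> int z - int y > 0 \<and> nat (int z - int y) \<in> nz S)"
proof
  assume "\<exists>z. neighbor S y z \<and> int z - int y > 0 \<and> nat (int z - int y) \<in> nz S"
  then obtain z where nb: "neighbor S y z" and gt: "int z - int y > 0"
    and sS: "nat (int z - int y) \<in> nz S" by blast
  define s where "s = nat (int z - int y)"
  have zs: "z = y + s" using gt s_def by simp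
  have sinS: "s \<in> S" using sS s_def by (simp add: nz_def)
  have clos: "\<And>a b. a \<in> S \<Longrightarrow> b \<in> S \<Longrightarrow> a + b \<in> S"
    using assms(1) by (simp add: numerical_semigroup_def)
  have yX: "y \<in> Xset S" using assms(2) by (auto simp: vertices_def edges_def)
  hence yS: "y \<in> S" and ypos: "y \<noteq> 0" by (auto simp: Xset_def nz_def)
  have y2S: "2 * y \<in> S" using clos[OF yS yS] by (simp add: mult_2)
  have sumX: "2 * y + s \<in> Xset S" using nb zs by (simp add: neighbor_def mult_2 add.assoc)
  have "2 * y \<in> Xset S"
  proof -
    have "\<not> (int (2*y) - int (mult S) \<ge> 0 \<and> nat (int (2*y) - int (mult S)) \<in> S)"
    proof
      assume h: "int (2*y) - int (mult S) \<ge> 0 \<and> nat (int (2*y) - int (mult S)) \<in> S"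
      have eq: "nat (int (2*y+s) - int (mult S)) = nat (int (2*y) - int (mult S)) + s"
        using h by linarith
      have "nat (int (2*y+s) - int (mult S)) \<in> S" unfolding eq using clos h sinS by blast
      moreover have "int (2*y+s) - int (mult S) \<ge> 0" using h by simp
      ultimately show False using sumX by (simp add: Xset_def)
    qed
    thus ?thesis using y2S ypos by (simp add: Xset_def nz_def)
  qed
  thus False using assms(3) by (simp add: nonloopy_def)
qed

end
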